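(* Let $q:\chi\to[0,\infty)$ be a risk metric. A risk-sharing rule $\boldsymbol{C}$ on $\chi^n$ is the $q$-proportional RS rule if and only if it satisfies the reshuffling property and has source-anonymous contribution-over-$q$ ratios.
   Context: Fix a probability space $(\Omega,\mathcal{F},\mathbb{P})$ and an integer $n\ge 1$. Let $\chi$ be a convex cone of non-negative random variables on this space (closed under addition and under multiplication by positive scalars) with $0\in\chi$. All equalities between random variables are understood almost surely. A pool is a vector $\boldsymbol{X}=(X_1,\ldots,X_n)\in\chi^n$, with aggregate loss $S_{\boldsymbol{X}}=\sum_{i=1}^n X_i$. A risk-sharing (RS) rule is a mapping $\boldsymbol{C}$ assigning to every pool $\boldsymbol{X}\in\chi^n$ a vector $\boldsymbol{C}[\boldsymbol{X}]=(C_1[\boldsymbol{X}],\ldots,C_n[\boldsymbol{X}])$ of real-valued random variables satisfying $\sum_{i=1}^n C_i[\boldsymbol{X}]=S_{\boldsymbol{X}}$. A risk metric is any function $q:\chi\to[0,\infty)$. The $q$-proportional RS rule is specified only on pools with $q[X_j]>0$ for at least one $j$, where it is given by $C_i[\boldsymbol{X}]=\frac{q[X_i]}{\sum_{k=1}^n q[X_k]}S_{\boldsymbol{X}}$ for $i=1,\ldots,n$; a rule "is the $q$-proportional RS rule" if its contributions equal these on every such pool (its values on pools with all $q[X_j]=0$ are left unspecified). For a permutation $\pi$ of $\{1,\ldots,n\}$, $\boldsymbol{X}^\pi=(X_{\pi(1)},\ldots,X_{\pi(n)})$. Reshuffling property: $C_i[\boldsymbol{X}^\pi]=C_{\pi(i)}[\boldsymbol{X}]$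 for all pools $\boldsymbol{X}$, permutations $\pi$ and indices $i$. Source-anonymous contribution-over-$q$ ratios: for every pool $\boldsymbol{X}$, every permutation $\pi$ and every $i$ with $q[X_i]>0$, $C_i[\boldsymbol{X}^\pi]=\frac{q[X_{\pi(i)}]}{q[X_i]}C_i[\boldsymbol{X}]$. *)

theory Defs
  imports "HOL-Probability.Probability" "HOL-Combinatorics.Permutations"
begin

text \<open>Random variables are real-valued functions on the sample space of the
probability space M; equalities between random variables are almost sure.
A pool is a vector indexed by a finite type 'n (so n = CARD('n) \<ge> 1).\<close>

definition convex_cone_rv :: "'w measure \<Rightarrow> ('w \<Rightarrow> real) set \<Rightarrow> bool" where
  "convex_cone_rv M K \<longleftrightarrow>
     (\<lambda>_. 0) \<in> K \<and>
     (\<forall>X\<in>K. X \<in> borel_measurable M \<and> (AE \<omega> in M. 0 \<le> X \<omega>)) \<and>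
     (\<forall>X\<in>K. \<forall>Y\<in>K. (\<lambda>\<omega>. X \<omega> + Y \<omega>) \<in> K) \<and>
     (\<forall>X\<in>K. \<forall>c::real. c > 0 \<longrightarrow> (\<lambda>\<omega>. c * X \<omega>) \<in> K)"

definition pools :: "('w \<Rightarrow> real) set \<Rightarrow> ('n::finite \<Rightarrow> 'w \<Rightarrow> real) set" where
  "pools K = {X. \<forall>i. X i \<in> K}"

definition aggregate :: "('n::finite \<Rightarrow> 'w \<Rightarrow> real) \<Rightarrow> 'w \<Rightarrow> real" where
  "aggregate X = (\<lambda>\<omega>. \<Sum>i\<in>UNIV. X i \<omega>)"

definition risk_metric :: "('w \<Rightarrow> real) set \<Rightarrow> (('w \<Rightarrow> real) \<Rightarrow> real) \<Rightarrow> bool" where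
  "risk_metric K q \<longleftrightarrow> (\<forall>X\<in>K. 0 \<le> q X)"

definition RS_rule :: "'w measure \<Rightarrow> ('w \<Rightarrow> real) set
    \<Rightarrow> (('n::finite \<Rightarrow> 'w \<Rightarrow> real) \<Rightarrow> 'n \<Rightarrow> 'w \<Rightarrow> real) \<Rightarrow> bool" where
  "RS_rule M K C \<longleftrightarrow> (\<forall>X\<in>pools K.
      (\<forall>i. C X i \<in> borel_measurable M) \<and>
      (AE \<omega> in M. (\<Sum>i\<in>UNIV. C X i \<omega>) = aggregate X \<omega>))"

definition q_proportional :: "'w measure \<Rightarrow> ('w \<Rightarrow> real) set \<Rightarrow> (('w \<Rightarrow> real) \<Rightarrow> real)
    \<Rightarrow> (('n::finite \<Rightarrow> 'w \<Rightarrow> real) \<Rightarrow> 'n \<Rightarrow> 'w \<Rightarrow> real) \<Rightarrow> bool" where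
  "q_proportional M K q C \<longleftrightarrow> (\<forall>X\<in>pools K. (\<exists>j. q (X j) > 0) \<longrightarrow>
      (\<forall>i. AE \<omega> in M. C X i \<omega> = q (X i) / (\<Sum>k\<in>UNIV. q (X k)) * aggregate X \<omega>))"

definition reshuffling_on :: "'w measure \<Rightarrow> ('n::finite \<Rightarrow> 'w \<Rightarrow> real) set
    \<Rightarrow> (('n \<Rightarrow> 'w \<Rightarrow> real) \<Rightarrow> 'n \<Rightarrow> 'w \<Rightarrow> real) \<Rightarrow> bool" where
  "reshuffling_on M P C \<longleftrightarrow> (\<forall>X\<in>P. \<forall>\<pi>. \<pi> permutes UNIV \<longrightarrow>
      (\<forall>i. AE \<omega> in M. C (\<lambda>j. X (\<pi> j)) i \<omega> = C X (\<pi> i) \<omega>))"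

definition source_anonymous :: "'w measure \<Rightarrow> ('w \<Rightarrow> real) set \<Rightarrow> (('w \<Rightarrow> real) \<Rightarrow> real)
    \<Rightarrow> (('n::finite \<Rightarrow> 'w \<Rightarrow> real) \<Rightarrow> 'n \<Rightarrow> 'w \<Rightarrow> real) \<Rightarrow> bool" where
  "source_anonymous M K q C \<longleftrightarrow> (\<forall>X\<in>pools K. \<forall>\<pi>. \<pi> permutes UNIV \<longrightarrow>
      (\<forall>i. q (X i) > 0 \<longrightarrow>
        (AE \<omega> in M. C (\<lambda>j. X (\<pi> j)) i \<omega> = q (X (\<pi> i)) / q (X i) * C X i \<omega>)))"

end

theory Submission
  imports Defs
begin

lemma perm_sum:
  fixes g :: "'n::finite \<Rightarrow> real"
  assumes "\<pi> permutes (UNIV::'n set)"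
  shows "(\<Sum>k\<in>UNIV. g (\<pi> k)) = (\<Sum>k\<in>UNIV. g k)"
  using sum.permute[OF assms, of g] by (simp add: comp_def)

lemma perm_agg:
  fixes X :: "'n::finite \<Rightarrow> 'w \<Rightarrow> real"
  assumes "\<pi> permutes (UNIV::'n set)"
  shows "aggregate (\<lambda>j. X (\<pi> j)) = aggregate X"
  unfolding aggregate_def
proof
  fix \<omega> show "(\<Sum>i\<in>UNIV. X (\<pi> i) \<omega>) = (\<Sum>i\<in>UNIV. X i \<omega>)"
    using perm_sum[OF assms, of "\<lambda>k. X k \<omega>"] by simp
qed

theorem theorem3:
  fixes M :: "'w measure" and K :: "('w \<Rightarrow> real) set"
    and q :: "('w \<Rightarrow> real) \<Rightarrow> real"
    and C :: "('n::finite \<Rightarrow> 'w \<Rightarrow> real) \<Rightarrow> 'n \<Rightarrow> 'w \<Rightarrow> real"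
  assumes "prob_space M"
    and "convex_cone_rv M K"
    and "risk_metric K q"
    and "RS_rule M K C"
  shows "q_proportional M K q C \<longleftrightarrow>
           (reshuffling_on M {X \<in> pools K. \<exists>j. q (X j) > 0} C \<and> source_anonymous M K q C)"
proof
  assume qp: "q_proportional M K q C"
  have pp: "(\<lambda>j. X (\<pi> j)) \<in> pools K" if "X \<in> pools K" for X :: "'n \<Rightarrow> 'w \<Rightarrow> real" and \<pi>
    using that by (auto simp: pools_def)
  have possum: "(\<Sum>k\<in>UNIV. q (X k)) > 0" if "X \<in> pools K" "q (X j) > 0" for X :: "'n \<Rightarrow> 'w \<Rightarrow> real" and j
  proof -
    have "q (X j) \<le> (\<Sum>k\<in>UNIV. q (X k))"
      by (rule member_le_sum) (use that assms(3) in \<open>auto simp: pools_def risk_metric_def\<close>)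
    with that show ?thesis by linarith
  qed
  show "reshuffling_on M {X \<in> pools K. \<exists>j. q (X j) > 0} C \<and> source_anonymous M K q C"
  proof
    show "reshuffling_on M {X \<in> pools K. \<exists>j. q (X j) > 0} C"
      unfolding reshuffling_on_def
    proof (intro ballI allI impI)
      fix X :: "'n \<Rightarrow> 'w \<Rightarrow> real" and \<pi> :: "'n \<Rightarrow> 'n" and i
      assume X: "X \<in> {X \<in> pools K. \<exists>j. q (X j) > 0}" and p: "\<pi> permutes UNIV"
      then obtain j :: 'n where j: "q (X j) > 0" "X \<in> pools K" by auto
      have j2: "q (X (\<pi> (inv \<pi> j))) > 0" using j p by (simp add: permutes_inverses)
      have a1: "AE \<omega> in M. C (\<lambda>j. X (\<pi> j)) i \<omega> = q (X (\<pi> i)) / (\<Sum>k\<in>UNIV. q (X (\<pi> k))) * aggregate (\<lambda>j. X (\<pi> j)) \<omega>"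
        using qp[unfolded q_proportional_def, rule_format, OF pp[OF j(2), of \<pi>], of i] j2 by blast
      have a2: "AE \<omega> in M. C X (\<pi> i) \<omega> = q (X (\<pi> i)) / (\<Sum>k\<in>UNIV. q (X k)) * aggregate X \<omega>"
        using qp j unfolding q_proportional_def by blast
      show "AE \<omega> in M. C (\<lambda>j. X (\<pi> j)) i \<omega> = C X (\<pi> i) \<omega>"
        using a1 a2 by eventually_elim (simp add: perm_sum[OF p, of "\<lambda>k. q (X k)", simplified] perm_agg[OF p])
    qed
  next
    show "source_anonymous M K q C"
      unfolding source_anonymous_def
    proof (intro ballI allI impI)
      fix X :: "'n \<Rightarrow> 'w \<Rightarrow> real" and \<pi> :: "'n \<Rightarrow> 'n" and i
      assume X: "X \<in> pools K" and p: "\<pi> permutes UNIV" and qi: "q (X i) > 0"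
      have j2: "q (X (\<pi> (inv \<pi> i))) > 0" using qi p by (simp add: permutes_inverses)
      have a1: "AE \<omega> in M. C (\<lambda>j. X (\<pi> j)) i \<omega> = q (X (\<pi> i)) / (\<Sum>k\<in>UNIV. q (X (\<pi> k))) * aggregate (\<lambda>j. X (\<pi> j)) \<omega>"
        using qp[unfolded q_proportional_def, rule_format, OF pp[OF X, of \<pi>], of i] j2 by blast
      have a2: "AE \<omega> in M. C X i \<omega> = q (X i) / (\<Sum>k\<in>UNIV. q (X k)) * aggregate X \<omega>"
        using qp X qi unfolding q_proportional_def by blast
      show "AE \<omega> in M. C (\<lambda>j. X (\<pi> j)) i \<omega> = q (X (\<pi> i)) / q (X i) * C X i \<omega>"
        using a1 a2 by eventually_elim (use qi in \<open>simp add: perm_sum[OF p, of "\<lambda>k. q (X k)", simplified] perm_agg[OF p]\<close>)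
    qed
  qed
next
  assume "reshuffling_on M {X \<in> pools K. \<exists>j. q (X j) > 0} C \<and> source_anonymous M K q C"
  then have rs: "reshuffling_on M {X \<in> pools K. \<exists>j. q (X j) > 0} C"
    and sa: "source_anonymous M K q C" by auto
  show "q_proportional M K q C"
    unfolding q_proportional_def
  proof (intro ballI impI allI)
    fix X :: "'n \<Rightarrow> 'w \<Rightarrow> real" and i
    assume X: "X \<in> pools K" and "\<exists>j. q (X j) > 0"
    then obtain j where j: "q (X j) > 0" by auto
    have nn: "\<And>k. q (X k) \<ge> 0" using X assms(3) by (auto simp: pools_def risk_metric_def)
    have spos: "(\<Sum>k\<in>UNIV. q (X k)) > 0"
    proof -
      have "q (X j) \<le> (\<Sum>k\<in>UNIV. q (X k))"
        by (rule member_le_sum) (use nn in auto)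
      with j show ?thesis by linarith
    qed
    have rel: "AE \<omega> in M. C X k \<omega> = q (X k) / q (X j) * C X j \<omega>" for k
    proof -
      define \<pi> where "\<pi> = Transposition.transpose k j"
      have p: "\<pi> permutes UNIV" unfolding \<pi>_def by (rule permutes_swap_id) auto
      have pj: "\<pi> j = k" unfolding \<pi>_def by simp
      have b1: "AE \<omega> in M. C (\<lambda>l. X (\<pi> l)) j \<omega> = C X (\<pi> j) \<omega>"
        using rs X j p unfolding reshuffling_on_def by blast
      have b2: "AE \<omega> in M. C (\<lambda>l. X (\<pi> l)) j \<omega> = q (X (\<pi> j)) / q (X j) * C X j \<omega>"
        using sa X j p unfolding source_anonymous_def by blast
      show ?thesis using b1 b2 by eventually_elim (simp add: pj)
    qed
    have allrel: "AE \<omega> in M. \<forall>k\<in>UNIV. C X k \<omega> = q (X k) / q (X j) * C X j \<omega>"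
      by (rule AE_finite_allI) (use rel in auto)
    have sumC: "AE \<omega> in M. (\<Sum>k\<in>UNIV. C X k \<omega>) = aggregate X \<omega>"
      using assms(4) X unfolding RS_rule_def by blast
    show "AE \<omega> in M. C X i \<omega> = q (X i) / (\<Sum>k\<in>UNIV. q (X k)) * aggregate X \<omega>"
      using allrel sumC
    proof eventually_elim
      case (elim \<omega>)
      have ck: "C X k \<omega> = q (X k) / q (X j) * C X j \<omega>" for k
        using elim(1) by blast
      have "aggregate X \<omega> = (\<Sum>k\<in>UNIV. C X k \<omega>)"
        using elim(2) by argo
      also have "\<dots> = (\<Sum>k\<in>UNIV. q (X k) / q (X j) * C X j \<omega>)"
        by (rule sum.cong) (rule refl, rule ck)
      also have "\<dots> = (\<Sum>k\<in>UNIV. q (X k)) / q (X j) * C X j \<omega>"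
        by (simp add: sum_distrib_right sum_divide_distrib)
      finally have agg: "aggregate X \<omega> = (\<Sum>k\<in>UNIV. q (X k)) / q (X j) * C X j \<omega>" .
      have "C X i \<omega> = q (X i) / q (X j) * C X j \<omega>" by (rule ck)
      also have "\<dots> = q (X i) / (\<Sum>k\<in>UNIV. q (X k)) * aggregate X \<omega>"
        using spos j by (simp add: agg field_simps)
      finally show ?case .
    qed
  qed
qed

end
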